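(* For every odd prime $p$ there exist infinitely many real quadratic fields $K = \mathbb{Q}(\sqrt M)$ whose fundamental unit $\varepsilon_M$ is a $p$-th power in $K_{\mathfrak p}$ for every prime $\mathfrak p \mid p$ of $K$ (equivalently, the normalized $p$-adic regulator of $K$ is divisible by $p$); in particular there exist infinitely many real quadratic fields that are not $p$-rational.
   Context: $\varepsilon_M>1$ is the fundamental unit of $K$. For a number field $K$ and prime $p$, let $\mathfrak T_K$ be the torsion subgroup of the Galois group over $K$ of the maximal abelian pro-$p$-extension of $K$ unramified outside $p$ and $\infty$. $K$ is called $p$-rational if it satisfies the Leopoldt conjecture at $p$ (automatic for real quadratic fields) and $\mathfrak T_K$ is trivial. *)

theory Defs
  imports Complex_Main "HOL-Computational_Algebra.Computational_Algebra" "HOL-Algebra.Ideal_Product"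
begin

definition qfield :: "int \<Rightarrow> real set" where
  "qfield M = {of_rat a + of_rat b * sqrt (of_int M) | a b. True}"

definition ring_of_integers :: "int \<Rightarrow> real set" where
  "ring_of_integers M = {x \<in> qfield M. algebraic_int x}"

definition OK_ring :: "int \<Rightarrow> real ring" where
  "OK_ring M = \<lparr>carrier = ring_of_integers M, monoid.mult = (*), one = 1,
                 zero = 0, add = (+)\<rparr>"

definition is_fundamental_unit :: "int \<Rightarrow> real \<Rightarrow> bool" where
  "is_fundamental_unit M e \<longleftrightarrow>
     e \<in> ring_of_integers M \<and> inverse e \<in> ring_of_integers M \<and> e > 1 \<and>
     (\<forall>u. u \<in> ring_of_integers M \<and> inverse u \<in> ring_of_integers M \<and> u > 1 \<longrightarrow> e \<le> u)"

fun ideal_power :: "int \<Rightarrow> real set \<Rightarrow> nat \<Rightarrow> real set" where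
  "ideal_power M P 0 = ring_of_integers M"
| "ideal_power M P (Suc n) = ideal_prod (OK_ring M) P (ideal_power M P n)"

definition primes_above :: "int \<Rightarrow> nat \<Rightarrow> real set set" where
  "primes_above M p = {P. primeideal P (OK_ring M) \<and> real p \<in> P}"

text \<open>u (in O_K) is a p-th power in the completion K_P: u is a P-adic limit of
  p-th powers of elements of O_K, i.e. for every n there is x in O_K with
  u - x^p in P^n (O_K is dense in the P-adic completion, which is complete, and
  the p-th power map on the compact ring O_P is closed).\<close>
definition pth_power_in_completion :: "int \<Rightarrow> nat \<Rightarrow> real set \<Rightarrow> real \<Rightarrow> bool" where
  "pth_power_in_completion M p P u \<longleftrightarrow>
     (\<forall>n. \<exists>x \<in> ring_of_integers M. u - x ^ p \<in> ideal_power M P n)"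

end

theory Submission
  imports Defs
begin


lemma map_rat_mult: "map_poly (of_rat :: rat \<Rightarrow> real) (p * q) = map_poly of_rat p * map_poly of_rat q"
  by (rule poly_eqI) (simp add: coeff_mult coeff_map_poly of_rat_sum of_rat_mult)

lemma map_rat_add: "map_poly (of_rat :: rat \<Rightarrow> real) (p + q) = map_poly of_rat p + map_poly of_rat q"
  by (rule poly_eqI) (simp add: coeff_map_poly of_rat_add)

lemma map_int_mult: "map_poly (of_int :: int \<Rightarrow> rat) (p * q) = map_poly of_int p * map_poly of_int q"
  by (rule poly_eqI) (simp add: coeff_mult coeff_map_poly of_int_sum)

lemma map_int_inj:
  assumes "map_poly (of_int :: int \<Rightarrow> rat) p = map_poly of_int q"
  shows "p = q"
proof (rule poly_eqI)
  fix n
  have "(of_int (coeff p n) :: rat) = of_int (coeff q n)"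
    using arg_cong[OF assms, of "\<lambda>r. coeff r n"] by (simp add: coeff_map_poly)
  thus "coeff p n = coeff q n" by simp
qed

lemma rat_poly_denom:
  fixes f :: "rat poly"
  shows "\<exists>E F. E > (0::int) \<and> smult (of_int E) f = map_poly of_int F"
proof (induction f rule: pCons_induct)
  case 0
  show ?case by (rule exI[of _ 1], rule exI[of _ 0]) simp
next
  case (pCons c f)
  then obtain E F where EF: "E > 0" "smult (of_int E) f = map_poly of_int F" by blast
  obtain n m where nm: "quotient_of c = (n, m)" by (cases "quotient_of c") auto
  have mpos: "m > 0" using quotient_of_denom_pos[OF nm] .
  have cdef: "c = of_int n / of_int m" using quotient_of_div[OF nm] .
  have "smult (of_int (m * E)) (pCons c f) = map_poly of_int (pCons (n * E) (smult m F))"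
  proof -
    have "smult (of_int (m * E)) (pCons c f) = pCons (of_int (m*E) * c) (smult (of_int m) (smult (of_int E) f))"
      by simp
    also have "of_int (m*E) * c = (of_int (n * E) :: rat)" using mpos unfolding cdef by (simp add: field_simps)
    also have "smult (of_int m) (smult (of_int E) f) = map_poly of_int (smult m F)"
      using EF(2) by (simp add: map_poly_smult)
    finally show ?thesis by (simp add: map_poly_pCons)
  qed
  moreover have "m * E > 0" using mpos EF(1) by simp
  ultimately show ?case by blast
qed

lemma content_monic_int:
  fixes q :: "int poly"
  assumes "lead_coeff q = 1"
  shows "content q = 1"
proof -
  have "content q dvd 1" using content_dvd_coeff[of q "degree q"] assms by simp
  moreover have "content q \<ge> 0"
    by (metis abs_ge_zero normalize_content normalize_int_def)
  ultimately show ?thesis by simp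
qed

lemma content_nonneg_int: "content (q :: int poly) \<ge> 0"
  by (metis abs_ge_zero normalize_content normalize_int_def)

lemma gauss_monic:
  fixes q :: "int poly" and g h :: "rat poly"
  assumes lq: "lead_coeff q = 1" and fac: "map_poly of_int q = g * h" and lg: "lead_coeff g = 1"
  shows "coeff g i \<in> \<int>"
proof -
  obtain D G where DG: "D > 0" "smult (of_int D) g = map_poly of_int G" using rat_poly_denom by blast
  obtain E H where EH: "E > 0" "smult (of_int E) h = map_poly of_int H" using rat_poly_denom by blast
  have "map_poly (of_int :: int \<Rightarrow> rat) (smult (D*E) q) = map_poly of_int (G*H)"
  proof -
    have "map_poly (of_int :: int \<Rightarrow> rat) (smult (D*E) q) = smult (of_int D * of_int E) (g * h)"
      using fac by (simp add: map_poly_smult)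
    also have "\<dots> = smult (of_int D) g * smult (of_int E) h"
      by (simp add: mult_smult_left mult_smult_right) (simp add: mult.commute)
    also have "\<dots> = map_poly of_int (G*H)" using DG EH by (simp add: map_int_mult)
    finally show ?thesis .
  qed
  hence eq: "smult (D*E) q = G*H" by (rule map_int_inj)
  have "content (smult (D*E) q) = D * E" using content_monic_int[OF lq] DG EH by simp
  hence cGH: "content G * content H = D * E" using eq by (simp add: content_mult)
  have lh: "lead_coeff h = 1"
  proof -
    have "lead_coeff (map_poly (of_int :: int \<Rightarrow> rat) q) = 1"
      using lq by (simp add: degree_map_poly coeff_map_poly)
    thus ?thesis using fac lg by (simp add: lead_coeff_mult)
  qed
  have cGD: "content G dvd D"
  proof -
    have "(of_int (coeff G (degree g)) :: rat) = of_int D"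
      using arg_cong[OF DG(2), of "\<lambda>r. coeff r (degree g)"] lg by (simp add: coeff_map_poly)
    hence "coeff G (degree g) = D" by simp
    thus ?thesis using content_dvd_coeff[of G "degree g"] by simp
  qed
  have cHE: "content H dvd E"
  proof -
    have "(of_int (coeff H (degree h)) :: rat) = of_int E"
      using arg_cong[OF EH(2), of "\<lambda>r. coeff r (degree h)"] lh by (simp add: coeff_map_poly)
    hence "coeff H (degree h) = E" by simp
    thus ?thesis using content_dvd_coeff[of H "degree h"] by simp
  qed
  have "content G \<le> D" using zdvd_imp_le[OF cGD DG(1)] .
  moreover have "content H \<le> E" using zdvd_imp_le[OF cHE EH(1)] .
  moreover have "content G \<ge> 0" "content H \<ge> 0" by (rule content_nonneg_int)+
  ultimately have cG: "content G = D"
  proof -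
    assume a: "content G \<le> D" "content H \<le> E" "content G \<ge> 0" "content H \<ge> 0"
    show ?thesis
    proof (rule ccontr)
      assume "content G \<noteq> D"
      hence lt: "content G < D" using a by simp
      have "content G * content H \<le> content G * E" using a by (simp add: mult_left_mono)
      also have "\<dots> < D * E" using lt EH(1) by (simp add: mult_strict_right_mono)
      finally show False using cGH by simp
    qed
  qed
  have "D dvd coeff G i" using content_dvd_coeff[of G i] cG by simp
  then obtain k where k: "coeff G i = D * k" by blast
  have "of_int D * coeff g i = (of_int (coeff G i) :: rat)"
    using arg_cong[OF DG(2), of "\<lambda>r. coeff r i"] by (simp add: coeff_map_poly)
  hence "coeff g i = of_int k" using k DG(1) by simp
  thus ?thesis by simp
qed

lemma sqfree_rat:
  fixes M :: int and b :: rat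
  assumes sf: "squarefree M" and h: "of_int M * b^2 \<in> \<int>"
  shows "b \<in> \<int>"
proof -
  obtain P Q where pq: "quotient_of b = (P, Q)" by (cases "quotient_of b") auto
  have Qpos: "Q > 0" using quotient_of_denom_pos[OF pq] .
  have cop: "coprime P Q" using quotient_of_coprime[OF pq] .
  have bdef: "b = of_int P / of_int Q" using quotient_of_div[OF pq] .
  obtain n where n: "of_int M * b^2 = of_int n" using h by (auto elim: Ints_cases)
  have "of_int M * (of_int P)^2 = (of_int n * (of_int Q)^2 :: rat)"
    using n Qpos unfolding bdef by (simp add: field_simps power2_eq_square)
  hence eq: "M * P^2 = n * Q^2"
    by (metis of_int_eq_iff of_int_mult of_int_power)
  have "Q^2 dvd M * P^2" using eq by simp
  moreover have "coprime (Q^2) (P^2)" using cop by (simp add: coprime_commute)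
  ultimately have "Q^2 dvd M" using coprime_dvd_mult_left_iff by blast
  hence "Q dvd 1" using sf unfolding squarefree_def by blast
  hence "Q = 1" using Qpos by simp
  thus ?thesis using bdef by simp
qed

lemma sqrt_irrat:
  fixes M :: int
  assumes M1: "M > 1" and sf: "squarefree M"
  shows "sqrt (of_int M) \<notin> \<rat>"
proof
  assume "sqrt (of_int M) \<in> \<rat>"
  then obtain c where c: "sqrt (of_int M) = of_rat c" by (auto elim: Rats_cases)
  have s2: "(sqrt (of_int M))^2 = of_int M" using M1 by simp
  have cgt: "c > 1"
  proof -
    have "sqrt (of_int M) > 1" using M1 by simp
    thus ?thesis using c by (metis of_rat_1 of_rat_less)
  qed
  have "of_rat (c^2) = (of_int M :: real)" using s2 c by (simp add: of_rat_power)
  hence c2: "c^2 = of_int M"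
    by (metis of_rat_eq_iff of_rat_of_int_eq)
  have "of_int M * (1/c)^2 = 1" using c2 cgt M1 by (simp add: field_simps)
  hence "1/c \<in> \<int>" using sqfree_rat[OF sf] by (metis Ints_1)
  then obtain k where k: "1/c = of_int k" by (auto elim: Ints_cases)
  have "0 < 1/c" "1/c < 1" using cgt by auto
  hence "0 < k" "k < 1" using k by auto
  thus False by simp
qed

lemma lin_indep:
  fixes M :: int and a b :: rat
  assumes M1: "M > 1" and sf: "squarefree M"
    and h: "of_rat a + of_rat b * sqrt (of_int M) = (0::real)"
  shows "a = 0 \<and> b = 0"
proof -
  have "b = 0"
  proof (rule ccontr)
    assume "b \<noteq> 0"
    hence "sqrt (of_int M) = of_rat (- a / b)" using h
      by (simp add: of_rat_divide of_rat_minus field_simps)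
    thus False using sqrt_irrat[OF M1 sf] by (metis Rats_of_rat)
  qed
  thus ?thesis using h by simp
qed

lemma alg_int_quad:
  fixes M a b :: int
  assumes "M > 0"
  shows "algebraic_int (of_int a + of_int b * sqrt (of_int M) :: real)"
proof -
  let ?s = "sqrt (of_int M) :: real"
  have s2: "?s * ?s = of_int M" using assms by simp
  let ?q = "[:of_int (a^2 - M * b^2), of_int (-2*a), 1:] :: real poly"
  show ?thesis
  proof (rule algebraic_int.intros[of ?q])
    show "lead_coeff ?q = 1" by simp
    show "\<forall>i. coeff ?q i \<in> \<int>"
    proof
      fix i show "coeff ?q i \<in> \<int>"
        by (cases i; cases "i - 1"; auto simp: coeff_pCons split: nat.splits)
    qed
    show "poly ?q (of_int a + of_int b * ?s) = 0"
      using assms by (simp add: algebra_simps power2_eq_square s2)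
  qed
qed

lemma Zs_OK:
  fixes M a b :: int
  assumes "M > 0"
  shows "(of_int a + of_int b * sqrt (of_int M) :: real) \<in> ring_of_integers M"
proof -
  have "\<exists>a' b'. (of_int a + of_int b * sqrt (of_int M) :: real) = of_rat a' + of_rat b' * sqrt (of_int M)"
    by (rule exI[of _ "of_int a"], rule exI[of _ "of_int b"]) simp
  thus ?thesis using alg_int_quad[OF assms] unfolding ring_of_integers_def qfield_def by blast
qed


lemma OK_struct:
  fixes M :: int and a b :: rat
  assumes M1: "M > 1" and sf: "squarefree M" and bnz: "b \<noteq> 0"
    and ai: "algebraic_int (of_rat a + of_rat b * sqrt (of_int M) :: real)"
  shows "2*a \<in> \<int> \<and> a^2 - of_int M * b^2 \<in> \<int>"
proof -
  define s where "s = (sqrt (of_int M) :: real)"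
  define u where "u = of_rat a + of_rat b * s"
  have s2: "s * s = of_int M" using M1 unfolding s_def by simp
  obtain q where q: "poly (map_poly of_int q) u = 0" "lead_coeff q = 1"
    using ai unfolding algebraic_int_altdef_ipoly u_def s_def by blast
  define Q :: "rat poly" where "Q = map_poly of_int q"
  define g :: "rat poly" where "g = [:a^2 - of_int M * b^2, -2*a, 1:]"
  define h where "h = Q div g"
  define r where "r = Q mod g"
  have gnz: "g \<noteq> 0" unfolding g_def by simp
  have dg: "degree g = 2" unfolding g_def by simp
  have Qd: "Q = h * g + r" unfolding h_def r_def by simp
  have mapQ: "map_poly (of_rat :: rat \<Rightarrow> real) Q = map_poly of_int q"
    unfolding Q_def by (simp add: map_poly_map_poly o_def)
  have pg: "poly (map_poly (of_rat :: rat \<Rightarrow> real) g) u = 0"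
  proof -
    have mg: "map_poly (of_rat :: rat \<Rightarrow> real) g = [:of_rat (a^2 - of_int M * b^2), - 2 * of_rat a, 1:]"
      unfolding g_def by (simp add: map_poly_pCons of_rat_minus of_rat_mult)
    have e1: "(of_rat (a^2 - of_int M * b^2) :: real) = (of_rat a)^2 - of_int M * (of_rat b)^2"
      by (simp add: of_rat_diff of_rat_mult of_rat_power)
    have "poly (map_poly (of_rat :: rat \<Rightarrow> real) g) u = (of_rat a)^2 - of_int M * (of_rat b)^2 + u * (- 2 * of_rat a + u)"
      using mg e1 by simp
    also have "\<dots> = (of_rat b)^2 * (s * s - of_int M)"
      unfolding u_def by (simp add: algebra_simps power2_eq_square)
    finally show ?thesis using s2 by simp
  qed
  have pr: "poly (map_poly (of_rat :: rat \<Rightarrow> real) r) u = 0"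
  proof -
    have "0 = poly (map_poly (of_rat :: rat \<Rightarrow> real) Q) u" using q mapQ by simp
    also have "\<dots> = poly (map_poly of_rat h) u * poly (map_poly of_rat g) u + poly (map_poly of_rat r) u"
      unfolding Qd by (simp add: map_rat_add map_rat_mult)
    finally show ?thesis using pg by simp
  qed
  have degr: "degree r \<le> 1"
  proof (cases "r = 0")
    case True thus ?thesis by simp
  next
    case False
    have "degree r < degree g" using degree_mod_less'[OF gnz, of Q] False unfolding r_def by blast
    thus ?thesis using dg by simp
  qed
  have rform: "r = [:coeff r 0, coeff r 1:]"
  proof (rule poly_eqI)
    fix n show "coeff r n = coeff [:coeff r 0, coeff r 1:] n"
    proof (cases "n \<le> 1")
      case True
      hence "n = 0 \<or> n = 1" by auto
      thus ?thesis by (elim disjE) simp_all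
    next
      case False
      hence "coeff r n = 0" using degr by (intro coeff_eq_0) simp
      moreover have n2: "n = Suc (Suc (n - 2))" using False by simp
      have "coeff [:coeff r 0, coeff r 1:] n = 0" by (subst n2) (simp only: coeff_pCons_Suc coeff_0)
      ultimately show ?thesis by simp
    qed
  qed
  have "of_rat (coeff r 0) + of_rat (coeff r 1) * u = 0"
    using pr by (subst (asm) rform) (simp add: map_poly_pCons mult.commute)
  hence "of_rat (coeff r 0 + coeff r 1 * a) + of_rat (coeff r 1 * b) * sqrt (of_int M) = (0::real)"
    unfolding u_def s_def by (simp add: of_rat_add of_rat_mult algebra_simps)
  from lin_indep[OF M1 sf this] have cr: "coeff r 1 = 0" "coeff r 0 = 0" using bnz by auto
  have r0: "r = 0"
  proof -
    have "r = [:coeff r 0, coeff r 1:]" by (rule rform)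
    also have "\<dots> = 0" using cr by simp
    finally show ?thesis .
  qed
  have fac: "map_poly of_int q = g * h" using Qd r0 unfolding Q_def by (simp add: mult.commute)
  have lg: "lead_coeff g = 1" unfolding g_def by simp
  have c1: "coeff g 1 \<in> \<int>" by (rule gauss_monic[OF q(2) fac lg])
  have c0: "coeff g 0 \<in> \<int>" by (rule gauss_monic[OF q(2) fac lg])
  have "-2*a \<in> \<int>" using c1 unfolding g_def by simp
  hence "2*a \<in> \<int>" by (metis Ints_minus minus_minus mult_minus_left)
  moreover have "a^2 - of_int M * b^2 \<in> \<int>" using c0 unfolding g_def by simp
  ultimately show ?thesis by blast
qed

lemma unit_form:
  fixes M :: int and u :: real
  assumes M1: "M > 1" and sf: "squarefree M"
    and uO: "u \<in> ring_of_integers M" and iO: "inverse u \<in> ring_of_integers M" and u1: "u > 1"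
  shows "\<exists>X Y :: int. 2 * u = of_int X + of_int Y * sqrt (of_int M) \<and>
           (X^2 - M * Y^2 = 4 \<or> X^2 - M * Y^2 = -4) \<and> X > 0 \<and> Y > 0"
proof -
  define s where "s = (sqrt (of_int M) :: real)"
  have s2: "s * s = of_int M" using M1 unfolding s_def by simp
  have spos: "s > 0" using M1 unfolding s_def by simp
  obtain a b where ab: "u = of_rat a + of_rat b * s"
    using uO unfolding ring_of_integers_def qfield_def s_def by blast
  have au: "algebraic_int u" using uO unfolding ring_of_integers_def by blast
  have ai: "algebraic_int (inverse u)" using iO unfolding ring_of_integers_def by blast
  show ?thesis
  proof (cases "b = 0")
    case True
    hence "u \<in> \<rat>" using ab by simp
    hence "u \<in> \<int>" using au rational_algebraic_int_is_int by blast
    moreover have "inverse u \<in> \<rat>" using \<open>u \<in> \<rat>\<close> by simp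
    hence "inverse u \<in> \<int>" using ai rational_algebraic_int_is_int by blast
    then obtain k where k: "inverse u = of_int k" by (auto elim: Ints_cases)
    have "0 < inverse u" "inverse u < 1" using u1 by (auto simp: inverse_less_1_iff)
    hence "0 < k" "k < 1" using k by auto
    thus ?thesis by simp
  next
    case False
    define N where "N = a^2 - of_int M * b^2"
    define v where "v = of_rat a - of_rat b * s"
    have uv: "u * v = of_rat N"
      unfolding ab v_def N_def using s2
      by (simp add: of_rat_diff of_rat_mult of_rat_power algebra_simps power2_eq_square)
    have vnz: "v \<noteq> 0"
    proof
      assume "v = 0"
      hence "of_rat a + of_rat (-b) * sqrt (of_int M) = (0::real)" unfolding v_def s_def by (simp add: of_rat_minus)
      from lin_indep[OF M1 sf this] False show False by simp
    qed
    have Nnz: "N \<noteq> 0"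
    proof
      assume "N = 0"
      hence "u * v = 0" using uv by simp
      thus False using vnz u1 by simp
    qed
    have inv: "inverse u = of_rat (a / N) + of_rat (- b / N) * s"
    proof -
      have Nr: "(of_rat N :: real) \<noteq> 0" using Nnz by simp
      have "inverse u = v / of_rat N" using uv u1 Nr by (simp add: field_simps)
      thus ?thesis unfolding v_def using Nr by (simp add: of_rat_divide of_rat_minus field_simps)
    qed
    have st1: "2*a \<in> \<int> \<and> a^2 - of_int M * b^2 \<in> \<int>"
      using OK_struct[OF M1 sf False] au ab s_def by simp
    have "-b/N \<noteq> 0" using False Nnz by simp
    from OK_struct[OF M1 sf this, of "a/N"] ai inv s_def
    have st2: "(a/N)^2 - of_int M * (-b/N)^2 \<in> \<int>" by simp
    have "(a/N)^2 - of_int M * (-b/N)^2 = (a^2 - of_int M * b^2) / N^2"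
      by (simp add: power_divide diff_divide_distrib)
    also have "\<dots> = 1 / N" using Nnz unfolding N_def[symmetric] by (simp add: power2_eq_square)
    finally have "(a/N)^2 - of_int M * (-b/N)^2 = 1 / N" .
    hence invN: "1/N \<in> \<int>" using st2 by simp
    have NZ: "N \<in> \<int>" using st1 N_def by simp
    obtain n where n: "N = of_int n" using NZ by (auto elim: Ints_cases)
    obtain m where m: "1/N = of_int m" using invN by (auto elim: Ints_cases)
    have "of_int (n * m) = (1::rat)" using n m Nnz by (simp add: field_simps)
    hence "n * m = 1" by (metis of_int_1 of_int_eq_iff)
    hence n1: "n = 1 \<or> n = -1" using zmult_eq_1_iff by blast
    obtain X where X: "2*a = of_int X" using st1 by (auto elim: Ints_cases)
    have "of_int M * (2*b)^2 = (2*a)^2 - 4 * N" unfolding N_def by (simp add: algebra_simps power2_eq_square)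
    hence "of_int M * (2*b)^2 \<in> \<int>" using X n by simp
    hence "2*b \<in> \<int>" using sqfree_rat[OF sf] by blast
    then obtain Y where Y: "2*b = of_int Y" by (auto elim: Ints_cases)
    have "of_int (X^2 - M * Y^2) = (of_int (4 * n) :: rat)"
    proof -
      have "of_int (X^2 - M * Y^2) = (2*a)^2 - of_int M * (2*b)^2" using X Y by simp
      also have "\<dots> = 4 * N" unfolding N_def by (simp add: algebra_simps power2_eq_square)
      finally show ?thesis using n by simp
    qed
    hence XY: "X^2 - M * Y^2 = 4 * n" by (metis of_int_eq_iff)
    have u2: "2 * u = of_int X + of_int Y * s"
    proof -
      have "2 * u = of_rat (2*a) + of_rat (2*b) * s" unfolding ab by (simp add: of_rat_mult algebra_simps)
      thus ?thesis using X Y by simp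
    qed
    have v2: "2 * v = of_int X - of_int Y * s"
    proof -
      have "2 * v = of_rat (2*a) - of_rat (2*b) * s" unfolding v_def by (simp add: of_rat_mult algebra_simps)
      thus ?thesis using X Y by simp
    qed
    have absv: "\<bar>v\<bar> < 1"
    proof -
      have "\<bar>u * v\<bar> = 1" using uv n n1 by auto
      hence "\<bar>u\<bar> * \<bar>v\<bar> = 1" by (simp add: abs_mult)
      hence "\<bar>v\<bar> = 1 / u" using u1 by (simp add: field_simps)
      thus ?thesis using u1 by simp
    qed
    have "of_int X = u + v" using u2 v2 by simp
    hence "(of_int X :: real) > 0" using absv u1 by linarith
    hence Xpos: "X > 0" by simp
    have "of_int Y * s = u - v" using u2 v2 by simp
    hence "of_int Y * s > 0" using absv u1 by linarith
    hence Ypos: "Y > 0" using spos by (simp add: zero_less_mult_iff)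
    have "X^2 - M * Y^2 = 4 \<or> X^2 - M * Y^2 = -4" using XY n1 by auto
    thus ?thesis using u2 Xpos Ypos unfolding s_def by blast
  qed
qed



lemma int_core:
  fixes d P2 X Y :: int
  assumes d7: "d \<ge> 7" and P: "P2 \<ge> 1" and Xp: "X > 0" and Yp: "Y > 0" and Yl: "Y < 4*P2"
    and eq: "X^2 - (d^2*P2^2 + d) * Y^2 = 4 \<or> X^2 - (d^2*P2^2 + d) * Y^2 = -4"
  shows False
proof -
  define z where "z = d * P2 * Y"
  have zpos: "z > 0" unfolding z_def using d7 P Yp by simp
  have Y2: "Y^2 \<ge> 1" using Yp by (simp add: one_le_power)
  have dy: "d * Y^2 \<ge> 7" using mult_mono[OF d7 Y2] d7 by simp
  have X2: "X^2 = z^2 + d*Y^2 + 4 \<or> X^2 = z^2 + d*Y^2 - 4"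
    using eq unfolding z_def by (auto simp: algebra_simps power2_eq_square)
  have "X^2 > z^2" using X2 dy by auto
  hence zX: "z < X" using Xp by (meson less_imp_le power_less_imp_less_base)
  have Xz: "X < z + 2"
  proof (rule ccontr)
    assume "\<not> X < z + 2"
    hence "z + 2 \<le> X" by simp
    hence "(z+2)^2 \<le> X^2" using zpos by (simp add: power_mono)
    hence a: "z^2 + 4*z + 4 \<le> X^2" by (simp add: power2_eq_square algebra_simps)
    have "d * Y * (4*P2 - Y) > 0" using d7 Yp Yl by simp
    hence "4 * z > d * Y^2" unfolding z_def by (simp add: algebra_simps power2_eq_square)
    thus False using a X2 by auto
  qed
  hence Xe: "X = z + 1" using zX by simp
  define k where "k = Y*Y - 2*P2*Y"
  have "(z+1)^2 = z^2 + d*Y^2 + 4 \<or> (z+1)^2 = z^2 + d*Y^2 - 4" using X2 Xe by simp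
  hence "d * k = -3 \<or> d * k = 5" unfolding k_def z_def by (auto simp: algebra_simps power2_eq_square)
  moreover have "d * k \<ge> 7 \<or> d * k \<le> -7 \<or> d * k = 0"
  proof -
    have "k \<ge> 1 \<or> k \<le> -1 \<or> k = 0" by auto
    moreover have "k \<ge> 1 \<Longrightarrow> d * k \<ge> 7" using mult_mono[OF d7, of 1 k] d7 by simp
    moreover have "k \<le> -1 \<Longrightarrow> d * k \<le> -7"
    proof -
      assume "k \<le> -1"
      hence "-k \<ge> 1" by simp
      hence "d * (-k) \<ge> 7" using mult_mono[OF d7, of 1 "-k"] d7 by simp
      thus ?thesis by simp
    qed
    ultimately show ?thesis by auto
  qed
  ultimately show False by auto
qed

lemma fund_unit:
  fixes d P2 M :: int
  assumes d7: "d \<ge> 7" and P: "P2 \<ge> 1" and Mdef: "M = d^2*P2^2 + d" and sf: "squarefree M"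
  shows "is_fundamental_unit M (of_int (2*d*P2^2+1) + of_int (2*P2) * sqrt (of_int M))"
proof -
  define s where "s = (sqrt (of_int M) :: real)"
  define eta where "eta = of_int (2*d*P2^2+1) + of_int (2*P2) * s"
  define eta' where "eta' = of_int (2*d*P2^2+1) + of_int (-2*P2) * s"
  have Mpos: "M > 1"
  proof -
    have "d^2*P2^2 \<ge> 0" by simp
    thus ?thesis using Mdef d7 by linarith
  qed
  have s2: "s * s = of_int M" using Mpos unfolding s_def by simp
  have spos: "s > 0" using Mpos unfolding s_def by simp
  have eO: "eta \<in> ring_of_integers M" unfolding eta_def s_def by (rule Zs_OK) (use Mpos in simp)
  have e'O: "eta' \<in> ring_of_integers M" unfolding eta'_def s_def by (rule Zs_OK) (use Mpos in simp)
  have "eta * eta' = of_int ((2*d*P2^2+1)^2 - 4*P2^2*M)"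
    unfolding eta_def eta'_def using s2 by (simp add: algebra_simps power2_eq_square)
  also have "(2*d*P2^2+1)^2 - 4*P2^2*M = 1" unfolding Mdef by (simp add: algebra_simps power2_eq_square)
  finally have ee: "eta * eta' = 1" by simp
  hence inv: "inverse eta = eta'" by (simp add: inverse_unique)
  have e1: "eta > 1"
  proof -
    have "2*d*P2^2+1 > 1" using d7 P by simp
    hence "(of_int (2*d*P2^2+1) :: real) > 1" by linarith
    moreover have "of_int (2*P2) * s > 0" using P spos by simp
    ultimately show ?thesis unfolding eta_def by linarith
  qed
  have minimal: "eta \<le> u" if uO: "u \<in> ring_of_integers M" and iO: "inverse u \<in> ring_of_integers M" and u1: "u > 1" for u
  proof -
    obtain X Y :: int where XY: "2 * u = of_int X + of_int Y * s"
        "X^2 - M * Y^2 = 4 \<or> X^2 - M * Y^2 = -4" "X > 0" "Y > 0"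
      using unit_form[OF Mpos sf uO iO u1] unfolding s_def by blast
    define X0 where "X0 = 4*d*P2^2+2"
    define Y0 where "Y0 = 4*P2"
    have YY: "Y \<ge> Y0"
    proof (rule ccontr)
      assume "\<not> Y \<ge> Y0"
      hence "Y < 4*P2" unfolding Y0_def by simp
      from int_core[OF d7 P XY(3) XY(4) this] XY(2) Mdef show False by simp
    qed
    have XX: "X \<ge> X0"
    proof (rule ccontr)
      assume "\<not> X \<ge> X0"
      hence "X \<le> X0 - 1" by simp
      hence "X^2 \<le> (X0 - 1)^2" using XY(3) by (simp add: power_mono)
      hence a: "X^2 \<le> X0^2 - 2*X0 + 1" by (simp add: power2_eq_square algebra_simps)
      have "Y0^2 \<le> Y^2" using YY P unfolding Y0_def by (intro power_mono) simp_all
      hence "M * Y0^2 \<le> M * Y^2" using Mpos by simp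
      moreover have "M * Y0^2 = X0^2 - 4" unfolding Mdef X0_def Y0_def by (simp add: power2_eq_square algebra_simps)
      ultimately have "X0^2 - 8 \<le> X^2" using XY(2) by auto
      moreover have "X0 \<ge> 30"
      proof -
        have "P2^2 \<ge> 1" using P by (simp add: one_le_power)
        hence "d * P2^2 \<ge> 7" using mult_mono[OF d7 \<open>P2^2 \<ge> 1\<close>] d7 by simp
        thus ?thesis unfolding X0_def by simp
      qed
      ultimately show False using a by simp
    qed
    have "2 * eta = of_int X0 + of_int Y0 * s" unfolding eta_def X0_def Y0_def by (simp add: algebra_simps)
    moreover have "of_int X0 \<le> (of_int X :: real)" using XX by simp
    moreover have "of_int Y0 * s \<le> of_int Y * s" using YY spos by simp
    ultimately have "2 * eta \<le> 2 * u" using XY(1) by linarith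
    thus ?thesis by simp
  qed
  show ?thesis unfolding is_fundamental_unit_def
    using eO e'O inv e1 minimal unfolding eta_def s_def by auto
qed



definition Zs :: "int \<Rightarrow> real set" where
  "Zs M = {of_int a + of_int b * sqrt (of_int M) | a b. True}"

lemma Zs_intro: "of_int a + of_int b * sqrt (of_int M) \<in> Zs M"
  unfolding Zs_def by blast

lemma Zs_of_int: "of_int k \<in> Zs M"
  using Zs_intro[of k 0 M] by simp

lemma Zs_add: "x \<in> Zs M \<Longrightarrow> y \<in> Zs M \<Longrightarrow> x + y \<in> Zs M"
proof -
  assume "x \<in> Zs M" "y \<in> Zs M"
  then obtain a b c d where "x = of_int a + of_int b * sqrt (of_int M)" "y = of_int c + of_int d * sqrt (of_int M)"
    unfolding Zs_def by blast
  hence "x + y = of_int (a + c) + of_int (b + d) * sqrt (of_int M)" by (simp add: algebra_simps)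
  thus ?thesis by (metis Zs_intro)
qed

lemma Zs_uminus: "x \<in> Zs M \<Longrightarrow> - x \<in> Zs M"
proof -
  assume "x \<in> Zs M"
  then obtain a b where "x = of_int a + of_int b * sqrt (of_int M)" unfolding Zs_def by blast
  hence "- x = of_int (- a) + of_int (- b) * sqrt (of_int M)" by (simp add: algebra_simps)
  thus ?thesis by (metis Zs_intro)
qed

lemma Zs_mult:
  assumes M: "M > 0"
  shows "x \<in> Zs M \<Longrightarrow> y \<in> Zs M \<Longrightarrow> x * y \<in> Zs M"
proof -
  assume "x \<in> Zs M" "y \<in> Zs M"
  then obtain a b c d where xy: "x = of_int a + of_int b * sqrt (of_int M)" "y = of_int c + of_int d * sqrt (of_int M)"
    unfolding Zs_def by blast
  have s2: "sqrt (of_int M) * sqrt (of_int M) = (of_int M :: real)" using M by simp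
  have "x * y = of_int (a*c + b*d*M) + of_int (a*d + b*c) * sqrt (of_int M)"
    unfolding xy using M by (simp add: algebra_simps s2)
  thus ?thesis by (metis Zs_intro)
qed

lemma Zs_diff: "x \<in> Zs M \<Longrightarrow> y \<in> Zs M \<Longrightarrow> x - y \<in> Zs M"
  using Zs_add[of x M "-y"] Zs_uminus[of y M] by simp

lemma Zs_power:
  assumes M: "M > 0"
  shows "x \<in> Zs M \<Longrightarrow> x ^ n \<in> Zs M"
proof (induction n)
  case 0 thus ?case using Zs_of_int[of 1 M] by simp
next
  case (Suc n) thus ?case using Zs_mult[OF M] by simp
qed

lemma Zs_sum:
  assumes "finite A" "\<And>j. j \<in> A \<Longrightarrow> f j \<in> Zs M"
  shows "sum f A \<in> Zs M"
  using assms
proof (induction A rule: finite_induct)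
  case empty thus ?case using Zs_of_int[of 0 M] by simp
next
  case (insert x F) thus ?case using Zs_add by simp
qed

lemma Zs_nat_mult: "M > 0 \<Longrightarrow> x \<in> Zs M \<Longrightarrow> of_nat c * x \<in> Zs M"
  using Zs_mult[of M "of_int (int c)" x] Zs_of_int[of "int c" M] by simp

lemma Zs_OK': "M > 0 \<Longrightarrow> x \<in> Zs M \<Longrightarrow> x \<in> ring_of_integers M"
  unfolding Zs_def using Zs_OK by blast

lemma binom_step:
  fixes p k :: nat and t :: real
  assumes p: "prime p" "p \<ge> 3" and k: "k \<ge> 1" and M: "M > 0" and t: "t \<in> Zs M"
  shows "\<exists>w \<in> Zs M. (1 + real p ^ k * t) ^ p = 1 + real p ^ (k+1) * t + real p ^ (k+2) * w"
proof -
  define x where "x = real p ^ k * t"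
  define c where "c j = (p choose j) * p ^ (k*j) div p ^ (k+2)" for j
  have dv: "p ^ (k+2) dvd (p choose j) * p ^ (k*j)" if j: "j \<in> {2..p}" for j
  proof (cases "j = p")
    case True
    have "k + 2 \<le> k * p"
    proof -
      have "k * p \<ge> k * 3" using p by simp
      thus ?thesis using k by linarith
    qed
    hence "p ^ (k+2) dvd p ^ (k*p)" by (rule le_imp_power_dvd)
    thus ?thesis using True by simp
  next
    case False
    hence jl: "j < p" "j \<noteq> 0" using j by auto
    have d1: "p dvd (p choose j)" using dvd_choose_prime[OF jl(1) jl(2)] p by simp
    have "k * j \<ge> k * 2" using j by simp
    hence "k + 1 \<le> k * j" using k by linarith
    hence d2: "p ^ (k+1) dvd p ^ (k*j)" by (rule le_imp_power_dvd)
    have "p * p ^ (k+1) dvd (p choose j) * p ^ (k*j)" using mult_dvd_mono[OF d1 d2] .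
    thus ?thesis by simp
  qed
  have cj: "real (p choose j) * x ^ j = real p ^ (k+2) * (of_nat (c j) * t ^ j)" if j: "j \<in> {2..p}" for j
  proof -
    have "(p choose j) * p ^ (k*j) = p ^ (k+2) * c j" using dv[OF j] unfolding c_def by simp
    hence "real (p choose j) * real p ^ (k*j) = real p ^ (k+2) * real (c j)"
      by (metis of_nat_mult of_nat_power)
    moreover have "x ^ j = real p ^ (k*j) * t ^ j" unfolding x_def by (simp add: power_mult_distrib power_mult)
    ultimately show ?thesis by (simp add: algebra_simps)
  qed
  define w where "w = (\<Sum>j\<in>{2..p}. of_nat (c j) * t ^ j)"
  have wZ: "w \<in> Zs M" unfolding w_def
    by (intro Zs_sum) (auto intro: Zs_nat_mult[OF M] Zs_power[OF M t])
  have "(1 + x) ^ p = (\<Sum>j\<le>p. real (p choose j) * x ^ j)"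
    using binomial_ring[of x 1 p] by (simp add: add.commute)
  also have "{..p} = insert 0 (insert 1 {2..p})" using p by auto
  also have "(\<Sum>j\<in>insert 0 (insert 1 {2..p}). real (p choose j) * x ^ j)
      = 1 + real p * x + (\<Sum>j\<in>{2..p}. real (p choose j) * x ^ j)"
    by simp
  also have "(\<Sum>j\<in>{2..p}. real (p choose j) * x ^ j) = real p ^ (k+2) * w"
    unfolding w_def sum_distrib_left using cj by (intro sum.cong) auto
  finally have "(1 + x) ^ p = 1 + real p ^ (k+1) * t + real p ^ (k+2) * w"
    unfolding x_def by simp
  thus ?thesis using wZ unfolding x_def by blast
qed


lemma hensel:
  fixes p :: nat and t e :: real
  assumes p: "prime p" "p \<ge> 3" and M: "M > 0" and t: "t \<in> Zs M"
    and e: "e = 1 + real p ^ 2 * t"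
  shows "\<exists>x \<in> Zs M. \<exists>c \<in> Zs M. x ^ p = e + real p ^ (m + 2) * c"
proof (induction m)
  case 0
  have "(1::real) ^ p = e + real p ^ (0 + 2) * (- t)" using e by (simp add: power2_eq_square)
  moreover have "(1::real) \<in> Zs M" using Zs_of_int[of 1 M] by simp
  moreover have "- t \<in> Zs M" using Zs_uminus[OF t] .
  ultimately show ?case by blast
next
  case (Suc m)
  then obtain x c where x: "x \<in> Zs M" and c: "c \<in> Zs M" and xc: "x ^ p = e + real p ^ (m + 2) * c" by blast
  have mc: "- c \<in> Zs M" using Zs_uminus[OF c] .
  obtain w where w: "w \<in> Zs M"
    and bw: "(1 + real p ^ (m+1) * (- c)) ^ p = 1 + real p ^ (m+1+1) * (- c) + real p ^ (m+1+2) * w"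
    using binom_step[OF p, of "m+1" M "-c"] M mc by auto
  define x' where "x' = x * (1 + real p ^ (m+1) * (- c))"
  define q where "q = real p"
  define a where "a = q ^ m"
  define c' where "c' = - q * c * t + e * w - q * a * c * c + q * q * a * c * w"
  have x'Z: "x' \<in> Zs M" unfolding x'_def
    using Zs_mult[OF M] Zs_add Zs_of_int[of 1 M] Zs_power[OF M] Zs_of_int[of "int p" M] mc x
    by (metis of_int_1 of_int_of_nat_eq)
  have c'Z: "c' \<in> Zs M"
  proof -
    have qZ: "q \<in> Zs M" unfolding q_def using Zs_of_int[of "int p" M] by simp
    have aZ: "a \<in> Zs M" unfolding a_def using Zs_power[OF M qZ] .
    have eZ: "e \<in> Zs M" unfolding e using Zs_add Zs_mult[OF M] Zs_of_int[of 1 M] Zs_power[OF M qZ] t q_def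
      by (metis of_int_1)
    show ?thesis unfolding c'_def
      using Zs_add Zs_diff Zs_mult[OF M] Zs_uminus qZ aZ eZ c t w by metis
  qed
  have "x' ^ p = x ^ p * (1 + real p ^ (m+1) * (- c)) ^ p" unfolding x'_def by (simp add: power_mult_distrib)
  also have "\<dots> = (1 + q*q*t + q*q*a * c) * (1 - q*q*a*c + q*q*q*a*w)"
    unfolding xc bw e q_def a_def by (simp add: power_add power2_eq_square algebra_simps)
  also have "\<dots> = (1 + q*q*t) + q*q*q*a * c'"
    unfolding c'_def e q_def a_def by (simp add: algebra_simps power2_eq_square)
  also have "\<dots> = e + real p ^ (Suc m + 2) * c'"
    unfolding e q_def a_def by (simp add: power_add power2_eq_square algebra_simps)
  finally show ?case using x'Z c'Z by blast
qed

lemma hensel_all: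
  fixes p :: nat and t e :: real
  assumes p: "prime p" "p \<ge> 3" and M: "M > 0" and t: "t \<in> Zs M"
    and e: "e = 1 + real p ^ 2 * t"
  shows "\<exists>x \<in> Zs M. \<exists>c \<in> Zs M. e - x ^ p = real p ^ n * c"
proof -
  obtain x c where x: "x \<in> Zs M" and c: "c \<in> Zs M" and xc: "x ^ p = e + real p ^ (n + 2) * c"
    using hensel[OF p M t e] by blast
  have "e - x ^ p = real p ^ n * (- (real p ^ 2 * c))" using xc by (simp add: power_add algebra_simps power2_eq_square)
  moreover have "- (real p ^ 2 * c) \<in> Zs M"
    using Zs_uminus Zs_mult[OF M] Zs_power[OF M] Zs_of_int[of "int p" M] c by (metis of_int_of_nat_eq)
  ultimately show ?thesis using x by blast
qed

lemma in_ideal_power: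
  assumes pP: "real p \<in> P" and c: "c \<in> ring_of_integers M"
  shows "real p ^ n * c \<in> ideal_power M P n"
proof (induction n)
  case 0 thus ?case using c by simp
next
  case (Suc n)
  have "real p \<otimes>\<^bsub>OK_ring M\<^esub> (real p ^ n * c) \<in> ideal_prod (OK_ring M) P (ideal_power M P n)"
    by (rule ideal_prod.prod[OF pP Suc])
  thus ?case by (simp add: OK_ring_def mult.assoc)
qed

lemma local_pth:
  fixes p :: nat and t e :: real
  assumes p: "prime p" "p \<ge> 3" and M: "M > 0" and t: "t \<in> Zs M"
    and e: "e = 1 + real p ^ 2 * t"
  shows "\<forall>P \<in> primes_above M p. pth_power_in_completion M p P e"
proof
  fix P assume "P \<in> primes_above M p"
  hence pP: "real p \<in> P" unfolding primes_above_def by blast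
  show "pth_power_in_completion M p P e"
    unfolding pth_power_in_completion_def
  proof
    fix n
    obtain x c where x: "x \<in> Zs M" and c: "c \<in> Zs M" and xc: "e - x ^ p = real p ^ n * c"
      using hensel_all[OF p M t e] by blast
    have "e - x ^ p \<in> ideal_power M P n" using in_ideal_power[OF pP Zs_OK'[OF M c]] xc by simp
    thus "\<exists>x\<in>ring_of_integers M. e - x ^ p \<in> ideal_power M P n" using Zs_OK'[OF M x] by blast
  qed
qed



lemma odd_recip:
  "(\<Sum>j\<in>{1..L}. 1 / (2 * real j + 1)^2) \<le> 1/4 - 1 / (4 * (real L + 1))"
proof (induction L)
  case 0 thus ?case by simp
next
  case (Suc L)
  have key: "1 / (2 * real (Suc L) + 1)^2 \<le> 1 / (4 * (real L + 1)) - 1 / (4 * (real (Suc L) + 1))"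
  proof -
    define x where "x = real L"
    have x0: "x \<ge> 0" unfolding x_def by simp
    have "1 / (4 * (x + 1)) - 1 / (4 * (x + 1 + 1)) = (1 * (4 * (x + 1 + 1)) - 1 * (4 * (x + 1))) / (4 * (x + 1) * (4 * (x + 1 + 1)))"
      by (rule diff_frac_eq) (use x0 in auto)
    also have "\<dots> = 4 / (16 * (x + 1) * (x + 2))" by (simp add: algebra_simps)
    finally have r: "1 / (4 * (x + 1)) - 1 / (4 * (x + 1 + 1)) = 4 / (16 * (x + 1) * (x + 2))" .
    have "1 / (2 * real (Suc L) + 1)^2 = 4 / (4 * (2 * x + 3)^2)" unfolding x_def by (simp add: algebra_simps)
    also have "4 / (4 * (2 * x + 3)^2) \<le> 4 / (16 * (x + 1) * (x + 2))"
    proof (rule divide_left_mono)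
      show "16 * (x + 1) * (x + 2) \<le> 4 * (2 * x + 3)^2" by (simp add: power2_eq_square algebra_simps)
      show "0 < 4 * (2 * x + 3)^2 * (16 * (x + 1) * (x + 2))" using x0 by (intro mult_pos_pos) auto
    qed simp
    also have "\<dots> = 1 / (4 * (real L + 1)) - 1 / (4 * (real (Suc L) + 1))" using r unfolding x_def by simp
    finally show ?thesis .
  qed
  have "(\<Sum>j\<in>{1..Suc L}. 1 / (2 * real j + 1)^2) = (\<Sum>j\<in>{1..L}. 1 / (2 * real j + 1)^2) + 1 / (2 * real (Suc L) + 1)^2"
    by simp
  also have "\<dots> \<le> (1/4 - 1 / (4 * (real L + 1))) + (1 / (4 * (real L + 1)) - 1 / (4 * (real (Suc L) + 1)))"
    using Suc.IH key by (rule add_mono)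
  also have "\<dots> = 1/4 - 1 / (4 * (real (Suc L) + 1))" by simp
  finally show ?case .
qed

lemma card_progression:
  fixes m N :: nat
  assumes m: "m > 0"
    and uniq: "\<And>i j. i \<in> S \<Longrightarrow> j \<in> S \<Longrightarrow> i mod m = j mod m"
    and S: "S \<subseteq> {..<N}"
  shows "card S \<le> N div m + 1"
proof -
  have inj: "inj_on (\<lambda>i. i div m) S"
  proof
    fix i j assume "i \<in> S" "j \<in> S" "i div m = j div m"
    moreover have "i mod m = j mod m" using uniq \<open>i \<in> S\<close> \<open>j \<in> S\<close> by blast
    ultimately show "i = j" by (metis div_mult_mod_eq)
  qed
  have sub: "(\<lambda>i. i div m) ` S \<subseteq> {..N div m}"
  proof
    fix y assume "y \<in> (\<lambda>i. i div m) ` S"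
    then obtain i where "i \<in> S" "y = i div m" by blast
    moreover have "i \<le> N" using S \<open>i \<in> S\<close> by auto
    ultimately show "y \<in> {..N div m}" by (simp add: div_le_mono)
  qed
  have "card ((\<lambda>i. i div m) ` S) \<le> card {..N div m}" by (rule card_mono[OF finite_atMost sub])
  moreover have "card ((\<lambda>i. i div m) ` S) = card S" by (rule card_image[OF inj])
  ultimately have "card S \<le> card {..N div m}" by simp
  thus ?thesis by simp
qed

lemma mod_eq_from_dvd:
  fixes n :: nat and a b c i j :: nat
  assumes cop: "coprime (int n) (int c)" and di: "int n dvd int c * (int i - int j)"
  shows "i mod n = j mod n"
proof -
  have "int n dvd int i - int j" using di cop by (simp add: coprime_dvd_mult_right_iff)
  hence "int i mod int n = int j mod int n" by (simp add: mod_eq_dvd_iff)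
  thus ?thesis by (metis of_nat_eq_iff zmod_int)
qed


lemma sq_dvd_le:
  fixes x y L :: nat
  assumes "x^2 dvd y" "y > 0" "y \<le> L^2"
  shows "x \<le> L"
proof -
  have "x^2 \<le> y" using assms(1,2) by (rule dvd_imp_le)
  hence "x^2 \<le> L^2" using assms(3) by (rule le_trans)
  thus ?thesis by (meson power2_nat_le_eq_le)
qed

lemma sq_dvd_odd:
  fixes x y :: nat
  assumes "x^2 dvd y" "\<not> 4 dvd y"
  shows "odd x"
proof
  assume "even x"
  then obtain k where "x = 2*k" by blast
  hence "4 dvd x^2" by (simp add: power2_eq_square)
  thus False using assms dvd_trans by blast
qed

lemma sieve:
  fixes A B :: nat
  assumes A1: "A \<ge> 1" and A4: "A mod 4 = 1"
  shows "\<exists>d > B. d mod 4 = 1 \<and> squarefree d \<and> squarefree (A*d+1)"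
proof -
  define K where "K = 8*A + 2*B + 8"
  define N where "N = K^2"
  define L where "L = 2*A*K + 1"
  define S where "S = (\<lambda>j. 2*j+1) ` {1..L}"
  define B1 where "B1 n = {i \<in> {..<N}. n^2 dvd 4*i+1}" for n
  define B2 where "B2 n = {i \<in> {..<N}. n^2 dvd A*(4*i+1)+1}" for n
  define G where "G = {i \<in> {..<N}. squarefree (4*i+1) \<and> squarefree (A*(4*i+1)+1)}"
  define Bad where "Bad = {..<N} - G"
  have m1: "(4*i+1) mod 4 = 1" for i :: nat by simp
  have m2: "(A*(4*i+1)+1) mod 4 = 2" for i :: nat
  proof -
    have e: "A*(4*i+1)+1 = (A + 1) + 4*(A*i)" by (simp add: algebra_simps)
    have "(A + 1) mod 4 = 2" using A4 by presburger
    thus ?thesis by (simp only: e mod_mult_self2)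
  qed
  have n4_1: "\<not> 4 dvd (4*i+1)" for i :: nat using m1[of i] by presburger
  have n4_2: "\<not> 4 dvd (A*(4*i+1)+1)" for i :: nat using m2[of i] by presburger
  have bnd2: "A*(4*i+1)+1 \<le> L^2" if "i < N" for i
  proof -
    have "4*i+1 \<le> 4*N" using that by simp
    hence "A*(4*i+1) \<le> A*(4*N)" by (rule mult_left_mono) simp
    moreover have "A*(4*N) + 1 \<le> L^2"
    proof -
      have e1: "A*(4*N) = 4*A*K^2" unfolding N_def by simp
      have "A \<le> A*A" using A1 by simp
      hence "4*A*K^2 \<le> 4*(A*A)*K^2" by (intro mult_right_mono) simp_all
      hence a: "A*(4*N) \<le> 4*(A*A)*K^2" using e1 by linarith
      have L2: "L^2 = 4*(A*A)*K^2 + 4*A*K + 1" unfolding L_def by (simp add: power2_eq_square algebra_simps)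
      show ?thesis using a L2 by linarith
    qed
    ultimately show ?thesis by simp
  qed
  have bnd1: "4*i+1 \<le> L^2" if "i < N" for i
  proof -
    have "1*(4*i+1) \<le> A*(4*i+1)" using A1 by (rule mult_right_mono) simp
    hence "4*i+1 \<le> A*(4*i+1)" by simp
    thus ?thesis using bnd2[OF that] by simp
  qed
  have inS: "x \<in> S" if "odd x" "x \<noteq> 1" "x \<le> L" for x
  proof -
    obtain j where j: "x = 2*j+1" using \<open>odd x\<close> by (metis oddE)
    have "j \<ge> 1" using j that(2) by simp
    moreover have "j \<le> L" using j that(3) by simp
    ultimately show ?thesis unfolding S_def using j by auto
  qed
  have cover: "Bad \<subseteq> (\<Union>n\<in>S. B1 n \<union> B2 n)"
  proof
    fix i assume "i \<in> Bad"
    hence iN: "i < N" and ng: "\<not> (squarefree (4*i+1) \<and> squarefree (A*(4*i+1)+1))"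
      unfolding Bad_def G_def by auto
    show "i \<in> (\<Union>n\<in>S. B1 n \<union> B2 n)"
    proof (cases "squarefree (4*i+1)")
      case False
      then obtain x where x: "x^2 dvd 4*i+1" "\<not> x dvd 1" by (rule not_squarefreeE)
      have "odd x" using sq_dvd_odd[OF x(1) n4_1] .
      moreover have "x \<noteq> 1" using x(2) by auto
      moreover have "x \<le> L" using sq_dvd_le[OF x(1) _ bnd1[OF iN]] by simp
      ultimately have "x \<in> S" by (rule inS)
      moreover have "i \<in> B1 x" unfolding B1_def using iN x(1) by simp
      ultimately show ?thesis by blast
    next
      case True
      hence "\<not> squarefree (A*(4*i+1)+1)" using ng by simp
      then obtain x where x: "x^2 dvd A*(4*i+1)+1" "\<not> x dvd 1" by (rule not_squarefreeE)
      have "odd x" using sq_dvd_odd[OF x(1) n4_2] .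
      moreover have "x \<noteq> 1" using x(2) by auto
      moreover have "x \<le> L" using sq_dvd_le[OF x(1) _ bnd2[OF iN]] by simp
      ultimately have "x \<in> S" by (rule inS)
      moreover have "i \<in> B2 x" unfolding B2_def using iN x(1) by simp
      ultimately show ?thesis by blast
    qed
  qed
  have oddS: "odd n" "n > 0" if "n \<in> S" for n using that unfolding S_def by auto
  have cop4: "coprime (int (n^2)) 4" if "odd n" for n :: nat
  proof -
    have c: "coprime (int n) 2" using that by simp
    have "coprime (int n) (2^2)" by (simp only: coprime_power_right_iff) (simp add: that)
    hence c4: "coprime (int n) 4" by simp
    have "coprime (int n ^ 2) 4" by (simp only: coprime_power_left_iff) (simp add: c4 that)
    thus ?thesis by simp
  qed
  have cB1: "card (B1 n) \<le> N div n^2 + 1" if "n \<in> S" for n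
  proof (rule card_progression)
    show "n^2 > 0" using oddS[OF that] by simp
    show "B1 n \<subseteq> {..<N}" unfolding B1_def by auto
    fix i j assume i: "i \<in> B1 n" and j: "j \<in> B1 n"
    have di: "int (n^2) dvd int (4*i+1)" using i unfolding B1_def by (simp only: of_nat_dvd_iff) blast
    have dj: "int (n^2) dvd int (4*j+1)" using j unfolding B1_def by (simp only: of_nat_dvd_iff) blast
    have eq: "int (4*i+1) - int (4*j+1) = int 4 * (int i - int j)" by simp
    have "int (n^2) dvd int 4 * (int i - int j)" using dvd_diff[OF di dj] unfolding eq .
    thus "i mod n^2 = j mod n^2" using mod_eq_from_dvd cop4[OF oddS(1)[OF that]] by (metis of_nat_numeral)
  qed
  have cB2: "card (B2 n) \<le> N div n^2 + 1" if "n \<in> S" for n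
  proof (rule card_progression)
    show "n^2 > 0" using oddS[OF that] by simp
    show "B2 n \<subseteq> {..<N}" unfolding B2_def by auto
    fix i j assume i: "i \<in> B2 n" and j: "j \<in> B2 n"
    have copA: "coprime (int (n^2)) (int A)"
    proof (rule coprimeI)
      fix c assume c1: "c dvd int (n^2)" and c2: "c dvd int A"
      have "int (n^2) dvd int (A*(4*i+1)+1)" using i unfolding B2_def by (simp only: of_nat_dvd_iff) blast
      hence "c dvd int (A*(4*i+1)+1)" using c1 dvd_trans by blast
      moreover have "int (A*(4*i+1)+1) = int A * int (4*i+1) + 1" by (simp only: of_nat_add of_nat_mult of_nat_1)
      ultimately have "c dvd int A * int (4*i+1) + 1" by metis
      moreover have "c dvd int A * int (4*i+1)" using c2 by simp
      ultimately show "is_unit c" using dvd_add_right_iff by blast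
    qed
    have cop: "coprime (int (n^2)) (int (4*A))"
      using copA cop4[OF oddS(1)[OF that]] by simp
    have di: "int (n^2) dvd int (A*(4*i+1)+1)" using i unfolding B2_def by (simp only: of_nat_dvd_iff) blast
    have dj: "int (n^2) dvd int (A*(4*j+1)+1)" using j unfolding B2_def by (simp only: of_nat_dvd_iff) blast
    have eq: "int (A*(4*i+1)+1) - int (A*(4*j+1)+1) = int (4*A) * (int i - int j)" by (simp add: algebra_simps)
    have "int (n^2) dvd int (4*A) * (int i - int j)" using dvd_diff[OF di dj] unfolding eq .
    thus "i mod n^2 = j mod n^2" using mod_eq_from_dvd cop by blast
  qed
  have finS: "finite S" unfolding S_def by simp
  have fin12: "finite (\<Union>n\<in>S. B1 n \<union> B2 n)" using finS unfolding B1_def B2_def by auto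
  have "card Bad \<le> card (\<Union>n\<in>S. B1 n \<union> B2 n)" by (rule card_mono[OF fin12 cover])
  also have "\<dots> \<le> (\<Sum>n\<in>S. card (B1 n \<union> B2 n))" by (rule card_UN_le[OF finS])
  also have "\<dots> \<le> (\<Sum>n\<in>S. 2 * (N div n^2 + 1))"
  proof (rule sum_mono)
    fix n assume "n \<in> S"
    thus "card (B1 n \<union> B2 n) \<le> 2 * (N div n^2 + 1)" using card_Un_le[of "B1 n" "B2 n"] cB1 cB2 by fastforce
  qed
  also have "\<dots> = (\<Sum>j\<in>{1..L}. 2 * (N div (2*j+1)^2 + 1))"
    unfolding S_def by (subst sum.reindex) (auto simp: inj_on_def)
  finally have cb: "card Bad \<le> (\<Sum>j\<in>{1..L}. 2 * (N div (2*j+1)^2 + 1))" .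
  have "real (\<Sum>j\<in>{1..L}. 2 * (N div (2*j+1)^2 + 1)) = (\<Sum>j\<in>{1..L}. 2 * real (N div (2*j+1)^2) + 2)"
    by (simp add: algebra_simps)
  also have "\<dots> \<le> (\<Sum>j\<in>{1..L}. 2 * real N * (1 / (2 * real j + 1)^2) + 2)"
  proof (rule sum_mono)
    fix j
    have "real (N div (2*j+1)^2) \<le> real N / real ((2*j+1)^2)" by (rule of_nat_div_le_of_nat)
    also have "\<dots> = real N * (1 / (2 * real j + 1)^2)" by simp
    finally show "2 * real (N div (2*j+1)^2) + 2 \<le> 2 * real N * (1 / (2 * real j + 1)^2) + 2" by simp
  qed
  also have "\<dots> = 2 * real N * (\<Sum>j\<in>{1..L}. 1 / (2 * real j + 1)^2) + 2 * real L"
    by (simp add: sum.distrib sum_distrib_left)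
  also have "\<dots> \<le> 2 * real N * (1/4) + 2 * real L"
  proof -
    have "(\<Sum>j\<in>{1..L}. 1 / (2 * real j + 1)^2) \<le> 1/4" using odd_recip[of L] by (smt (verit) divide_nonneg_nonneg of_nat_0_le_iff)
    thus ?thesis by (intro add_right_mono mult_left_mono) auto
  qed
  finally have rb: "real (card Bad) \<le> real N / 2 + 2 * real L" using cb by linarith
  show ?thesis
  proof (rule ccontr)
    assume nex: "\<not> ?thesis"
    have GB: "G \<subseteq> {..B}"
    proof
      fix i assume iG: "i \<in> G"
      show "i \<in> {..B}"
      proof (rule ccontr)
        assume "i \<notin> {..B}"
        hence "4*i+1 > B" by simp
        moreover have "(4*i+1) mod 4 = 1" by simp
        ultimately show False using nex iG unfolding G_def by auto
      qed
    qed
    hence cG: "card G \<le> B + 1" using card_mono[OF finite_atMost GB] by simp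
    have "N = card G + card Bad"
    proof -
      have "G \<subseteq> {..<N}" unfolding G_def by auto
      hence "card Bad = N - card G" unfolding Bad_def by (simp add: card_Diff_subset finite_subset)
      moreover have "card G \<le> N" using \<open>G \<subseteq> {..<N}\<close> card_mono[OF finite_lessThan] by fastforce
      ultimately show ?thesis by simp
    qed
    hence "real N \<le> real B + 1 + real N / 2 + 2 * real L" using cG rb by linarith
    moreover have "N = 8*A*K + 2*B*K + 8*K" unfolding N_def by (simp add: power2_eq_square K_def[symmetric] algebra_simps) (simp add: K_def algebra_simps)
    moreover have "L = 2*A*K + 1" by (rule L_def)
    moreover have "B * K \<ge> B" unfolding K_def by simp
    moreover have "K \<ge> 8" unfolding K_def by simp
    ultimately show False by linarith
  qed
qed


lemma squarefree_int_of_nat: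
  fixes n :: nat
  assumes "squarefree n"
  shows "squarefree (int n)"
proof (rule squarefreeI)
  fix x :: int assume "x^2 dvd int n"
  hence "int (nat \<bar>x\<bar> ^ 2) dvd int n" by simp
  hence "nat \<bar>x\<bar> ^ 2 dvd n" by (simp only: of_nat_dvd_iff)
  hence "nat \<bar>x\<bar> dvd 1" using squarefreeD[OF assms] by blast
  hence "nat \<bar>x\<bar> = 1" by simp
  moreover have "int (nat \<bar>x\<bar>) = \<bar>x\<bar>" by simp
  ultimately have "\<bar>x\<bar> = 1" by simp
  hence "\<bar>x\<bar> dvd 1" by simp
  thus "x dvd 1" by (simp only: abs_dvd_iff)
qed

theorem theorem6p3:
  fixes p :: nat
  assumes "prime p" and "odd p"
  shows "infinite {M :: int. M > 1 \<and> squarefree M \<and>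
           (\<exists>e. is_fundamental_unit M e \<and>
                (\<forall>P \<in> primes_above M p. pth_power_in_completion M p P e))}"
  (is "infinite ?S")
proof
  assume fin: "finite ?S"
  define Bd where "Bd = Max ?S"
  have Bd: "\<forall>x\<in>?S. x \<le> Bd" unfolding Bd_def using Max_ge[OF fin] by blast
  have p3: "p \<ge> 3"
  proof -
    have "p \<ge> 2" using assms(1) by (simp add: prime_ge_2_nat)
    moreover have "p \<noteq> 2" using assms(2) by auto
    ultimately show ?thesis by simp
  qed
  define A where "A = p^4"
  have A1: "A \<ge> 1" unfolding A_def using p3 by simp
  have A4: "A mod 4 = 1"
  proof -
    obtain k where k: "p = 2*k+1" using assms(2) by (metis oddE)
    define q where "q = 4*k^4 + 8*k^3 + 6*k^2 + 2*k"
    have "A = 4*q + 1"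
      unfolding A_def k q_def by (simp add: power4_eq_xxxx power3_eq_cube power2_eq_square algebra_simps)
    thus ?thesis by simp
  qed
  obtain d where d: "d > nat Bd + 7" "d mod 4 = 1" "squarefree d" "squarefree (A*d+1)"
    using sieve[OF A1 A4] by blast
  have cop: "coprime d (A*d+1)"
  proof (rule coprimeI)
    fix c assume "c dvd d" "c dvd A*d+1"
    moreover have "c dvd A*d" using \<open>c dvd d\<close> by simp
    ultimately show "is_unit c" using dvd_add_right_iff by blast
  qed
  have sfn: "squarefree (d*(A*d+1))" using squarefree_mult_coprime[OF cop d(3) d(4)] .
  define P2 :: int where "P2 = int p ^ 2"
  define M :: int where "M = int (d*(A*d+1))"
  have Mdef: "M = int d ^ 2 * P2 ^ 2 + int d"
    unfolding M_def P2_def A_def by (simp add: power2_eq_square power4_eq_xxxx algebra_simps)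
  have sfM: "squarefree M" unfolding M_def using squarefree_int_of_nat[OF sfn] .
  have d7: "int d \<ge> 7" using d(1) by simp
  have P1: "P2 \<ge> 1" unfolding P2_def using p3 by simp
  have Mgd: "M \<ge> int d"
  proof -
    have "d \<le> d*(A*d+1)" by simp
    thus ?thesis unfolding M_def by linarith
  qed
  have M1: "M > 1" using Mgd d7 by simp
  have Mpos: "M > 0" using M1 by simp
  define e where "e = of_int (2*int d*P2^2+1) + of_int (2*P2) * sqrt (of_int M)"
  have fu: "is_fundamental_unit M e" unfolding e_def by (rule fund_unit[OF d7 P1 Mdef sfM])
  define t where "t = of_int (2 * int d * P2) + of_int 2 * sqrt (of_int M)"
  have tZ: "t \<in> Zs M" unfolding t_def by (rule Zs_intro)
  have et: "e = 1 + real p ^ 2 * t"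
    unfolding e_def t_def P2_def by (simp add: algebra_simps power2_eq_square)
  have loc: "\<forall>P \<in> primes_above M p. pth_power_in_completion M p P e"
    by (rule local_pth[OF assms(1) p3 Mpos tZ et])
  have "M \<in> ?S" using M1 sfM fu loc by blast
  hence "M \<le> Bd" using Bd by blast
  moreover have "M > Bd" using Mgd d(1) by linarith
  ultimately show False by simp
qed

end
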